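(* Let $x<w$ in $W$ and let $\mathfrak w=s_1\cdots s_n$ be a reduced word of $w$ which is a good word for $x$ and satisfies $\lambda_{x,\mathfrak w}=\lambda(\mathscr C^-_{x,\mathfrak w})^*=(i_1,\ldots,i_d)$ with $i_1=1$. Write $s_i=s_{\alpha_i}$ with $\alpha_i$ simple. Then: (i) $x<s_1x$; (ii) $S(x,s_1w)=S(x,w)\setminus\{\gamma_1\}$, where $\gamma_1=s_n\cdots s_2\alpha_1$; (iii) $s_1\mathfrak w=s_2\cdots s_n$ is a good word of $s_1w$ for $x$; (iv) $\lambda_{x,s_1\mathfrak w}=(i_2-1,\ldots,i_d-1)=\lambda(\mathscr C^-_{x,s_1\mathfrak w})^*$ (positions in $s_2\cdots s_n$ numbered $1,\ldots,n-1$).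
   Context: Let $W$ be the Weyl group of a finite reduced root system $\Phi$ with positive roots $\Phi_+$ and simple reflections $S$, length $\ell$, Bruhat order $\le$. For $x\le w$, $S(x,w)=\{\alpha\in\Phi_+: x\le ws_\alpha<w\}$. For a reduced word $\mathfrak w=s_1\cdots s_n$ of $w$, $\lambda_{x,\mathfrak w}$ is the set of $i$ with $x\le s_1\cdots\widehat{s_i}\cdots s_n$, written as an increasing tuple $(i_1,\ldots,i_d)$; $\mathfrak w$ is a good word for $x$ if $x=s_1\cdots\widehat{s_{i_1}}\cdots\widehat{s_{i_d}}\cdots s_n$. Maximal chains $w=w_0\to\cdots\to w_d=x$ of covers in $[x,w]$ are labeled by $\lambda(\mathscr C)=(i_1,\ldots,i_d)$, where $w_k$ is obtained from $\mathfrak w$ by deleting $s_{i_1},\ldots,s_{i_k}$; $\mathscr C^-_{x,\mathfrak w}$ denotes the unique maximal chain with strictly decreasing label (which is lexicographically largest, by Björner–Wachs shellability). For a tuple $\lambda=(a_1,\ldots,a_d)$, $\lambda^*=(a_d,\ldots,a_1)$. *)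

theory Defs
  imports "HOL-Analysis.Analysis"
begin

definition srefl :: "'a::euclidean_space \<Rightarrow> 'a \<Rightarrow> 'a" where
  "srefl \<alpha> v = v - (2 * (v \<bullet> \<alpha>) / (\<alpha> \<bullet> \<alpha>)) *\<^sub>R \<alpha>"

definition root_system :: "'a::euclidean_space set \<Rightarrow> bool" where
  "root_system \<Phi> \<longleftrightarrow> finite \<Phi> \<and> 0 \<notin> \<Phi> \<and> span \<Phi> = UNIV
     \<and> (\<forall>\<alpha>\<in>\<Phi>. srefl \<alpha> ` \<Phi> = \<Phi>)
     \<and> (\<forall>\<alpha>\<in>\<Phi>. \<forall>\<beta>\<in>\<Phi>. 2 * (\<beta> \<bullet> \<alpha>) / (\<alpha> \<bullet> \<alpha>) \<in> \<int>)
     \<and> (\<forall>\<alpha>\<in>\<Phi>. \<forall>c::real. c *\<^sub>R \<alpha> \<in> \<Phi> \<longrightarrow> c = 1 \<or> c = -1)"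

definition nonneg_comb :: "'a::euclidean_space set \<Rightarrow> 'a \<Rightarrow> bool" where
  "nonneg_comb \<Delta> \<beta> \<longleftrightarrow> (\<exists>c. (\<forall>\<alpha>\<in>\<Delta>. c \<alpha> \<ge> (0::real)) \<and> \<beta> = (\<Sum>\<alpha>\<in>\<Delta>. c \<alpha> *\<^sub>R \<alpha>))"

definition simple_system :: "'a::euclidean_space set \<Rightarrow> 'a set \<Rightarrow> bool" where
  "simple_system \<Phi> \<Delta> \<longleftrightarrow> \<Delta> \<subseteq> \<Phi> \<and> independent \<Delta>
     \<and> (\<forall>\<beta>\<in>\<Phi>. nonneg_comb \<Delta> \<beta> \<or> nonneg_comb \<Delta> (- \<beta>))"

definition pos_roots :: "'a::euclidean_space set \<Rightarrow> 'a set \<Rightarrow> 'a set" where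
  "pos_roots \<Phi> \<Delta> = {\<beta>\<in>\<Phi>. nonneg_comb \<Delta> \<beta>}"

text \<open>Product of a word of simple reflections (given by the list of simple roots
  alpha_1 ... alpha_n): s_1 s_2 ... s_n, acting on vectors (leftmost applied last).\<close>
definition word_prod :: "'a::euclidean_space list \<Rightarrow> 'a \<Rightarrow> 'a" where
  "word_prod ws = foldr (\<lambda>\<alpha> f. srefl \<alpha> \<circ> f) ws id"

definition weyl :: "'a::euclidean_space set \<Rightarrow> ('a \<Rightarrow> 'a) set" where
  "weyl \<Delta> = {word_prod ws | ws. set ws \<subseteq> \<Delta>}"

definition len :: "'a::euclidean_space set \<Rightarrow> ('a \<Rightarrow> 'a) \<Rightarrow> nat" where
  "len \<Delta> w = (LEAST n. \<exists>ws. set ws \<subseteq> \<Delta> \<and> length ws = n \<and> word_prod ws = w)"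

definition reduced_word :: "'a::euclidean_space set \<Rightarrow> 'a list \<Rightarrow> ('a \<Rightarrow> 'a) \<Rightarrow> bool" where
  "reduced_word \<Delta> ws w \<longleftrightarrow> set ws \<subseteq> \<Delta> \<and> word_prod ws = w \<and> length ws = len \<Delta> w"

inductive bruhat_le :: "'a::euclidean_space set \<Rightarrow> 'a set \<Rightarrow> ('a \<Rightarrow> 'a) \<Rightarrow> ('a \<Rightarrow> 'a) \<Rightarrow> bool"
  for \<Phi> \<Delta> where
  bruhat_refl: "x \<in> weyl \<Delta> \<Longrightarrow> bruhat_le \<Phi> \<Delta> x x"
| bruhat_step: "bruhat_le \<Phi> \<Delta> x y \<Longrightarrow> \<beta> \<in> pos_roots \<Phi> \<Delta> \<Longrightarrow>
     len \<Delta> y < len \<Delta> (y \<circ> srefl \<beta>) \<Longrightarrow> bruhat_le \<Phi> \<Delta> x (y \<circ> srefl \<beta>)"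

definition bruhat_less :: "'a::euclidean_space set \<Rightarrow> 'a set \<Rightarrow> ('a \<Rightarrow> 'a) \<Rightarrow> ('a \<Rightarrow> 'a) \<Rightarrow> bool" where
  "bruhat_less \<Phi> \<Delta> x w \<longleftrightarrow> bruhat_le \<Phi> \<Delta> x w \<and> x \<noteq> w"

definition Sxw :: "'a::euclidean_space set \<Rightarrow> 'a set \<Rightarrow> ('a \<Rightarrow> 'a) \<Rightarrow> ('a \<Rightarrow> 'a) \<Rightarrow> 'a set" where
  "Sxw \<Phi> \<Delta> x w = {\<alpha>\<in>pos_roots \<Phi> \<Delta>. bruhat_le \<Phi> \<Delta> x (w \<circ> srefl \<alpha>)
                                    \<and> bruhat_less \<Phi> \<Delta> (w \<circ> srefl \<alpha>) w}"

text \<open>Delete the letters at the (1-based) positions in I.\<close>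
definition del_pos :: "'b list \<Rightarrow> nat set \<Rightarrow> 'b list" where
  "del_pos ws I = nths ws {j. Suc j \<notin> I}"

definition lam_set :: "'a::euclidean_space set \<Rightarrow> 'a set \<Rightarrow> ('a \<Rightarrow> 'a) \<Rightarrow> 'a list \<Rightarrow> nat set" where
  "lam_set \<Phi> \<Delta> x ws = {i\<in>{1..length ws}. bruhat_le \<Phi> \<Delta> x (word_prod (del_pos ws {i}))}"

definition lam :: "'a::euclidean_space set \<Rightarrow> 'a set \<Rightarrow> ('a \<Rightarrow> 'a) \<Rightarrow> 'a list \<Rightarrow> nat list" where
  "lam \<Phi> \<Delta> x ws = sorted_list_of_set (lam_set \<Phi> \<Delta> x ws)"

definition good_word :: "'a::euclidean_space set \<Rightarrow> 'a set \<Rightarrow> ('a \<Rightarrow> 'a) \<Rightarrow> 'a list \<Rightarrow> bool" where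
  "good_word \<Phi> \<Delta> x ws \<longleftrightarrow> x = word_prod (del_pos ws (lam_set \<Phi> \<Delta> x ws))"

definition bruhat_cover :: "'a::euclidean_space set \<Rightarrow> 'a set \<Rightarrow> ('a \<Rightarrow> 'a) \<Rightarrow> ('a \<Rightarrow> 'a) \<Rightarrow> bool" where
  "bruhat_cover \<Phi> \<Delta> u v \<longleftrightarrow> bruhat_less \<Phi> \<Delta> u v \<and> len \<Delta> v = Suc (len \<Delta> u)"

text \<open>C = [w_0, ..., w_d] is a maximal chain w = w_0 -> ... -> w_d = x of covers in [x,w],
  where w is the element of the reduced word ws, and L = (i_1,...,i_d) is its label:
  w_k is obtained from ws by deleting the letters at positions i_1,...,i_k.\<close>
definition chain_label :: "'a::euclidean_space set \<Rightarrow> 'a set \<Rightarrow> ('a \<Rightarrow> 'a) \<Rightarrow> 'a list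
     \<Rightarrow> ('a \<Rightarrow> 'a) list \<Rightarrow> nat list \<Rightarrow> bool" where
  "chain_label \<Phi> \<Delta> x ws C L \<longleftrightarrow>
     length C = Suc (length L) \<and> C ! 0 = word_prod ws \<and> last C = x
     \<and> (\<forall>k < length L. bruhat_cover \<Phi> \<Delta> (C ! Suc k) (C ! k))
     \<and> distinct L \<and> set L \<subseteq> {1..length ws}
     \<and> (\<forall>k \<le> length L. C ! k = word_prod (del_pos ws (set (take k L))))"

text \<open>L is the label of the maximal chain C^-_{x,ws} with strictly decreasing label
  (unique by Bjoerner-Wachs).\<close>
definition Cminus_label :: "'a::euclidean_space set \<Rightarrow> 'a set \<Rightarrow> ('a \<Rightarrow> 'a) \<Rightarrow> 'a list
     \<Rightarrow> nat list \<Rightarrow> bool" where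
  "Cminus_label \<Phi> \<Delta> x ws L \<longleftrightarrow> (\<exists>C. chain_label \<Phi> \<Delta> x ws C L) \<and> sorted_wrt (>) L"

end

theory Submission
  imports Defs
begin



lemma srefl_self: "\<alpha> \<noteq> 0 \<Longrightarrow> srefl \<alpha> \<alpha> = - \<alpha>"
  unfolding srefl_def by (simp add: scaleR_2 algebra_simps)

lemma srefl_invol: "\<alpha> \<noteq> 0 \<Longrightarrow> srefl \<alpha> (srefl \<alpha> v) = v"
  unfolding srefl_def by (simp add: inner_diff_left algebra_simps)

lemma srefl_invol_comp: "\<alpha> \<noteq> 0 \<Longrightarrow> srefl \<alpha> \<circ> srefl \<alpha> = id"
  by (auto simp: srefl_invol)

lemma linear_srefl: "linear (srefl \<alpha>)"
  unfolding srefl_def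
  by (intro linearI) (auto simp: inner_add_left algebra_simps add_divide_distrib scaleR_add_left)

lemma srefl_neg: "srefl (- \<alpha>) = srefl \<alpha>"
  unfolding srefl_def by (auto simp: fun_eq_iff)

lemma srefl_inner: "srefl \<alpha> u \<bullet> srefl \<alpha> v = u \<bullet> v"
proof (cases "\<alpha> = 0")
  case True then show ?thesis by (simp add: srefl_def)
next
  case False
  then have "\<alpha> \<bullet> \<alpha> \<noteq> 0" by simp
  then show ?thesis unfolding srefl_def
    by (simp add: inner_diff_left inner_diff_right algebra_simps inner_commute)
qed

definition orth :: "('a::euclidean_space \<Rightarrow> 'a) \<Rightarrow> bool" where
  "orth f \<longleftrightarrow> linear f \<and> (\<forall>u v. f u \<bullet> f v = u \<bullet> v)"

lemma orth_srefl: "orth (srefl \<alpha>)"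
  by (simp add: orth_def linear_srefl srefl_inner)

lemma orth_comp: "orth f \<Longrightarrow> orth g \<Longrightarrow> orth (f \<circ> g)"
  by (auto simp: orth_def linear_compose)

lemma orth_id: "orth id" by (simp add: orth_def linear_id)

lemma srefl_conj: assumes "orth f" shows "srefl (f \<beta>) \<circ> f = f \<circ> srefl \<beta>"
proof
  fix v
  from assms have l: "linear f" and i: "\<And>u v. f u \<bullet> f v = u \<bullet> v" by (auto simp: orth_def)
  show "(srefl (f \<beta>) \<circ> f) v = (f \<circ> srefl \<beta>) v"
    unfolding srefl_def o_def i
    by (simp add: linear_diff[OF l] linear_cmul[OF l])
qed




locale wctx =
  fixes \<Phi> \<Delta> :: "'a::euclidean_space set"
  assumes rs: "root_system \<Phi>" and ss: "simple_system \<Phi> \<Delta>"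
begin

abbreviation "P \<equiv> pos_roots \<Phi> \<Delta>"

lemma finPhi: "finite \<Phi>" using rs by (simp add: root_system_def)
lemma zero_notin: "0 \<notin> \<Phi>" using rs by (simp add: root_system_def)
lemma refl_closed: "\<alpha> \<in> \<Phi> \<Longrightarrow> srefl \<alpha> ` \<Phi> = \<Phi>" using rs by (simp add: root_system_def)
lemma reduced: "\<alpha> \<in> \<Phi> \<Longrightarrow> c *\<^sub>R \<alpha> \<in> \<Phi> \<Longrightarrow> c = 1 \<or> c = -1"
  using rs by (simp add: root_system_def)
lemma spanPhi: "span \<Phi> = UNIV" using rs by (simp add: root_system_def)
lemma Delta_sub: "\<Delta> \<subseteq> \<Phi>" using ss by (simp add: simple_system_def)
lemma indep: "independent \<Delta>" using ss by (simp add: simple_system_def)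
lemma finDelta: "finite \<Delta>" using Delta_sub finPhi finite_subset by blast
lemma Phi_nz: "\<beta> \<in> \<Phi> \<Longrightarrow> \<beta> \<noteq> 0" using zero_notin by auto
lemma Delta_nz: "\<alpha> \<in> \<Delta> \<Longrightarrow> \<alpha> \<noteq> 0" using Delta_sub Phi_nz by auto
lemma refl_mem: "\<alpha> \<in> \<Phi> \<Longrightarrow> \<beta> \<in> \<Phi> \<Longrightarrow> srefl \<alpha> \<beta> \<in> \<Phi>"
  using refl_closed by blast
lemma neg_closed: "\<beta> \<in> \<Phi> \<Longrightarrow> - \<beta> \<in> \<Phi>"
  using refl_mem[of \<beta> \<beta>] srefl_self Phi_nz by metis
lemma pos_sub: "P \<subseteq> \<Phi>" by (auto simp: pos_roots_def)

lemma pos_or_neg: "\<beta> \<in> \<Phi> \<Longrightarrow> \<beta> \<in> P \<or> - \<beta> \<in> P"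
  using ss neg_closed by (auto simp: simple_system_def pos_roots_def)

lemma coef_zero: "(\<Sum>\<gamma>\<in>\<Delta>. u \<gamma> *\<^sub>R \<gamma>) = 0 \<Longrightarrow> \<gamma> \<in> \<Delta> \<Longrightarrow> u \<gamma> = 0"
  using indep unfolding independent_explicit by blast

lemma not_both: assumes "\<beta> \<in> \<Phi>" shows "\<not> (\<beta> \<in> P \<and> - \<beta> \<in> P)"
proof
  assume "\<beta> \<in> P \<and> - \<beta> \<in> P"
  then obtain c c' where c: "\<forall>\<alpha>\<in>\<Delta>. c \<alpha> \<ge> 0" "\<beta> = (\<Sum>\<alpha>\<in>\<Delta>. c \<alpha> *\<^sub>R \<alpha>)"
    and c': "\<forall>\<alpha>\<in>\<Delta>. c' \<alpha> \<ge> 0" "- \<beta> = (\<Sum>\<alpha>\<in>\<Delta>. c' \<alpha> *\<^sub>R \<alpha>)"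
    by (auto simp: pos_roots_def nonneg_comb_def)
  have "(\<Sum>\<alpha>\<in>\<Delta>. (c \<alpha> + c' \<alpha>) *\<^sub>R \<alpha>) = 0"
    using c(2)[symmetric] c'(2)[symmetric] by (simp add: scaleR_add_left sum.distrib)
  then have "\<forall>\<alpha>\<in>\<Delta>. c \<alpha> + c' \<alpha> = 0" using coef_zero[of "\<lambda>\<alpha>. c \<alpha> + c' \<alpha>"] by blast
  then have "\<forall>\<alpha>\<in>\<Delta>. c \<alpha> = 0" using c(1) c'(1) by (metis add_nonneg_eq_0_iff)
  then have "\<beta> = 0" using c(2) by simp
  then show False using assms Phi_nz by blast
qed

lemma Delta_pos: assumes "\<alpha> \<in> \<Delta>" shows "\<alpha> \<in> P"
proof -
  have "(\<Sum>\<gamma>\<in>\<Delta>. (if \<gamma> = \<alpha> then 1 else 0) *\<^sub>R \<gamma>) = \<alpha>"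
    using assms finDelta by (simp add: if_distrib[where f="\<lambda>c. c *\<^sub>R _"] sum.delta cong: if_cong)
  then have "nonneg_comb \<Delta> \<alpha>" unfolding nonneg_comb_def
    by (rule_tac x="\<lambda>\<gamma>. if \<gamma> = \<alpha> then 1 else 0" in exI) auto
  then show ?thesis using assms Delta_sub by (auto simp: pos_roots_def)
qed

lemma sum_delta_scale: "\<alpha> \<in> \<Delta> \<Longrightarrow> (\<Sum>\<gamma>\<in>\<Delta>. (if \<gamma> = \<alpha> then k else 0) *\<^sub>R \<gamma>) = k *\<^sub>R \<alpha>"
proof -
  assume a: "\<alpha> \<in> \<Delta>"
  have "(\<Sum>\<gamma>\<in>\<Delta>. (if \<gamma> = \<alpha> then k else 0) *\<^sub>R \<gamma>) = (\<Sum>\<gamma>\<in>\<Delta>. if \<gamma> = \<alpha> then k *\<^sub>R \<gamma> else 0)"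
    by (rule sum.cong) auto
  also have "\<dots> = k *\<^sub>R \<alpha>" using a finDelta by (simp add: sum.delta)
  finally show ?thesis .
qed

lemma simple_perm: assumes a: "\<alpha> \<in> \<Delta>" and b: "\<beta> \<in> P" and ne: "\<beta> \<noteq> \<alpha>"
  shows "srefl \<alpha> \<beta> \<in> P"
proof (rule ccontr)
  assume nP: "srefl \<alpha> \<beta> \<notin> P"
  have bPhi: "\<beta> \<in> \<Phi>" using b pos_sub by auto
  have aPhi: "\<alpha> \<in> \<Phi>" using a Delta_sub by auto
  have "srefl \<alpha> \<beta> \<in> \<Phi>" using refl_mem aPhi bPhi by auto
  then have "- srefl \<alpha> \<beta> \<in> P" using pos_or_neg nP by blast
  then obtain c' where c': "\<forall>\<gamma>\<in>\<Delta>. c' \<gamma> \<ge> 0" "- srefl \<alpha> \<beta> = (\<Sum>\<gamma>\<in>\<Delta>. c' \<gamma> *\<^sub>R \<gamma>)"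
    by (auto simp: pos_roots_def nonneg_comb_def)
  obtain c where c: "\<forall>\<gamma>\<in>\<Delta>. c \<gamma> \<ge> 0" "\<beta> = (\<Sum>\<gamma>\<in>\<Delta>. c \<gamma> *\<^sub>R \<gamma>)"
    using b by (auto simp: pos_roots_def nonneg_comb_def)
  define k where "k = 2 * (\<beta> \<bullet> \<alpha>) / (\<alpha> \<bullet> \<alpha>)"
  have sb: "srefl \<alpha> \<beta> = \<beta> - k *\<^sub>R \<alpha>" by (simp add: srefl_def k_def)
  have "(\<Sum>\<gamma>\<in>\<Delta>. (c \<gamma> + c' \<gamma> - (if \<gamma> = \<alpha> then k else 0)) *\<^sub>R \<gamma>)
      = \<beta> + (- srefl \<alpha> \<beta>) - k *\<^sub>R \<alpha>"
    using c(2) c'(2) sum_delta_scale[OF a, of k]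
    by (simp add: scaleR_add_left scaleR_diff_left sum.distrib sum_subtractf)
  also have "\<dots> = 0" by (simp add: sb)
  finally have "\<forall>\<gamma>\<in>\<Delta>. c \<gamma> + c' \<gamma> - (if \<gamma> = \<alpha> then k else 0) = 0" using coef_zero[of "\<lambda>\<gamma>. c \<gamma> + c' \<gamma> - (if \<gamma> = \<alpha> then k else 0)"] by blast
  then have z: "\<forall>\<gamma>\<in>\<Delta>. \<gamma> \<noteq> \<alpha> \<longrightarrow> c \<gamma> = 0"
  proof (intro ballI impI)
    fix \<gamma> assume h: "\<forall>\<gamma>\<in>\<Delta>. c \<gamma> + c' \<gamma> - (if \<gamma> = \<alpha> then k else 0) = 0" "\<gamma> \<in> \<Delta>" "\<gamma> \<noteq> \<alpha>"
    then have "c \<gamma> + c' \<gamma> = 0" by auto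
    moreover have "c \<gamma> \<ge> 0" "c' \<gamma> \<ge> 0" using c(1) c'(1) h(2) by auto
    ultimately show "c \<gamma> = 0" by linarith
  qed
  have "\<beta> = (\<Sum>\<gamma>\<in>\<Delta>. (if \<gamma> = \<alpha> then c \<alpha> else 0) *\<^sub>R \<gamma>)"
    unfolding c(2) by (rule sum.cong) (use z in auto)
  also have "\<dots> = c \<alpha> *\<^sub>R \<alpha>" by (rule sum_delta_scale[OF a])
  finally have bc: "\<beta> = c \<alpha> *\<^sub>R \<alpha>" .
  then have "c \<alpha> *\<^sub>R \<alpha> \<in> \<Phi>" using bPhi by simp
  then have "c \<alpha> = 1 \<or> c \<alpha> = -1" using reduced aPhi by blast
  moreover have "c \<alpha> \<ge> 0" using c(1) a by auto
  ultimately have "c \<alpha> = 1" by auto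
  then have "\<beta> = \<alpha>" using bc by simp
  then show False using ne by simp
qed

end



lemma wp_Nil[simp]: "word_prod [] = id" by (simp add: word_prod_def)
lemma wp_Cons[simp]: "word_prod (a # ws) = srefl a \<circ> word_prod ws" by (simp add: word_prod_def)
lemma wp_append[simp]: "word_prod (xs @ ys) = word_prod xs \<circ> word_prod ys"
  by (induction xs) (auto simp: comp_assoc)
lemma orth_wp: "orth (word_prod ws)"
proof (induction ws)
  case Nil show ?case unfolding wp_Nil by (rule orth_id)
next
  case (Cons a ws) show ?case unfolding wp_Cons by (rule orth_comp[OF orth_srefl Cons.IH])
qed
lemma linear_wp: "linear (word_prod ws)" using orth_wp by (auto simp: orth_def)

context wctx begin

lemma wp_rev_inv: "set ws \<subseteq> \<Delta> \<Longrightarrow> word_prod (rev ws) \<circ> word_prod ws = id"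
proof (induction ws)
  case Nil then show ?case by simp
next
  case (Cons a ws)
  then have "a \<noteq> 0" using Delta_nz by auto
  then have "word_prod (rev (a # ws)) \<circ> word_prod (a # ws)
     = word_prod (rev ws) \<circ> (srefl a \<circ> srefl a) \<circ> word_prod ws" by (simp add: comp_assoc)
  also have "\<dots> = word_prod (rev ws) \<circ> word_prod ws" using \<open>a \<noteq> 0\<close> by (simp add: srefl_invol_comp)
  also have "\<dots> = id" proof -
    have "set ws \<subseteq> \<Delta>" using Cons.prems by simp
    then show ?thesis by (rule Cons.IH)
  qed
  finally show ?case .
qed

lemma wp_inv_rev: "set ws \<subseteq> \<Delta> \<Longrightarrow> word_prod ws \<circ> word_prod (rev ws) = id"
  using wp_rev_inv[of "rev ws"] by simp

lemma wp_rev_apply: "set ws \<subseteq> \<Delta> \<Longrightarrow> word_prod (rev ws) (word_prod ws v) = v"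
  using wp_rev_inv[of ws] by (auto simp: fun_eq_iff)
lemma wp_apply_rev: "set ws \<subseteq> \<Delta> \<Longrightarrow> word_prod ws (word_prod (rev ws) v) = v"
  using wp_inv_rev[of ws] by (auto simp: fun_eq_iff)

lemma wp_Phi: "set ws \<subseteq> \<Delta> \<Longrightarrow> \<beta> \<in> \<Phi> \<Longrightarrow> word_prod ws \<beta> \<in> \<Phi>"
  by (induction ws) (use Delta_sub refl_mem in auto)

lemma wp_weyl: "set ws \<subseteq> \<Delta> \<Longrightarrow> word_prod ws \<in> weyl \<Delta>"
  by (auto simp: weyl_def)

lemma weylE: "w \<in> weyl \<Delta> \<Longrightarrow> (\<And>ws. set ws \<subseteq> \<Delta> \<Longrightarrow> word_prod ws = w \<Longrightarrow> thesis) \<Longrightarrow> thesis"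
  by (auto simp: weyl_def)

lemma weyl_comp: assumes "u \<in> weyl \<Delta>" "v \<in> weyl \<Delta>" shows "u \<circ> v \<in> weyl \<Delta>"
proof -
  obtain ws vs where "set ws \<subseteq> \<Delta>" "u = word_prod ws" "set vs \<subseteq> \<Delta>" "v = word_prod vs"
    using assms by (auto simp: weyl_def)
  then show ?thesis using wp_weyl[of "ws @ vs"] by simp
qed

lemma weyl_srefl: "\<alpha> \<in> \<Delta> \<Longrightarrow> srefl \<alpha> \<in> weyl \<Delta>"
  using wp_weyl[of "[\<alpha>]"] by simp

lemma weyl_id: "id \<in> weyl \<Delta>" using wp_weyl[of "[]"] by simp

lemma weyl_inv: assumes "w \<in> weyl \<Delta>"
  obtains w' where "w' \<in> weyl \<Delta>" "w' \<circ> w = id" "w \<circ> w' = id"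
proof -
  obtain ws where "set ws \<subseteq> \<Delta>" "w = word_prod ws" using assms by (auto simp: weyl_def)
  then show ?thesis using that[of "word_prod (rev ws)"] wp_weyl[of "rev ws"] wp_rev_inv wp_inv_rev by auto
qed

lemma weyl_orth: "w \<in> weyl \<Delta> \<Longrightarrow> orth w" using orth_wp by (auto elim!: weylE)
lemma weyl_linear: "w \<in> weyl \<Delta> \<Longrightarrow> linear w" using linear_wp by (auto elim!: weylE)
lemma weyl_Phi: "w \<in> weyl \<Delta> \<Longrightarrow> \<beta> \<in> \<Phi> \<Longrightarrow> w \<beta> \<in> \<Phi>" using wp_Phi by (auto elim!: weylE)
lemma weyl_neg: "w \<in> weyl \<Delta> \<Longrightarrow> w (- v) = - w v" using weyl_linear linear_neg by blast

lemma len_le: "set ws \<subseteq> \<Delta> \<Longrightarrow> len \<Delta> (word_prod ws) \<le> length ws"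
  unfolding len_def by (rule Least_le) auto

lemma len_word: assumes "w \<in> weyl \<Delta>"
  obtains ws where "set ws \<subseteq> \<Delta>" "word_prod ws = w" "length ws = len \<Delta> w"
proof -
  have ex: "\<exists>n ws. set ws \<subseteq> \<Delta> \<and> length ws = n \<and> word_prod ws = w"
    using assms by (auto simp: weyl_def)
  show ?thesis using LeastI_ex[OF ex] that unfolding len_def by blast
qed

lemma len_id: "len \<Delta> id = 0" using len_le[of "[]"] by simp

lemma len_left: assumes "\<alpha> \<in> \<Delta>" "w \<in> weyl \<Delta>" shows "len \<Delta> (srefl \<alpha> \<circ> w) \<le> len \<Delta> w + 1"
proof -
  obtain ws where "set ws \<subseteq> \<Delta>" "word_prod ws = w" "length ws = len \<Delta> w" using len_word assms(2) by blast
  then show ?thesis using len_le[of "\<alpha> # ws"] assms(1) by auto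
qed

lemma len_right: assumes "\<alpha> \<in> \<Delta>" "w \<in> weyl \<Delta>" shows "len \<Delta> (w \<circ> srefl \<alpha>) \<le> len \<Delta> w + 1"
proof -
  obtain ws where "set ws \<subseteq> \<Delta>" "word_prod ws = w" "length ws = len \<Delta> w" using len_word assms(2) by blast
  then show ?thesis using len_le[of "ws @ [\<alpha>]"] assms(1) by auto
qed

lemma deletion:
  assumes "set ws \<subseteq> \<Delta>" "\<beta> \<in> P" "- word_prod ws \<beta> \<in> P"
  shows "\<exists>i < length ws. word_prod ws \<circ> srefl \<beta> = word_prod (take i ws @ drop (Suc i) ws)"
  using assms
proof (induction ws)
  case Nil
  then show ?case using not_both pos_sub by auto
next
  case (Cons a vs)
  have a: "a \<in> \<Delta>" and vs: "set vs \<subseteq> \<Delta>" using Cons.prems by auto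
  have bPhi: "\<beta> \<in> \<Phi>" using Cons.prems pos_sub by auto
  define \<gamma> where "\<gamma> = word_prod vs \<beta>"
  have gPhi: "\<gamma> \<in> \<Phi>" using wp_Phi vs bPhi \<gamma>_def by auto
  show ?case
  proof (cases "- \<gamma> \<in> P")
    case True
    then obtain i where "i < length vs" "word_prod vs \<circ> srefl \<beta> = word_prod (take i vs @ drop (Suc i) vs)"
      using Cons.IH vs Cons.prems(2) \<gamma>_def by blast
    then have eq: "word_prod vs \<circ> srefl \<beta> = word_prod (take i vs @ drop (Suc i) vs)" by simp
    have "word_prod (a # vs) \<circ> srefl \<beta> = srefl a \<circ> (word_prod vs \<circ> srefl \<beta>)" by (simp only: wp_Cons comp_assoc)
    also have "\<dots> = srefl a \<circ> word_prod (take i vs @ drop (Suc i) vs)" by (simp only: eq)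
    also have "\<dots> = word_prod (take (Suc i) (a # vs) @ drop (Suc (Suc i)) (a # vs))" by simp
    finally have fin: "word_prod (a # vs) \<circ> srefl \<beta> = word_prod (take (Suc i) (a # vs) @ drop (Suc (Suc i)) (a # vs))" .
    show ?thesis
    proof (rule exI[of _ "Suc i"], intro conjI)
      show "Suc i < length (a # vs)" using \<open>i < length vs\<close> by simp
    qed (rule fin)
  next
    case False
    then have gP: "\<gamma> \<in> P" using pos_or_neg gPhi by blast
    have "- srefl a \<gamma> \<in> P" using Cons.prems(3) \<gamma>_def by simp
    moreover have "srefl a \<gamma> \<in> \<Phi>" using refl_mem a Delta_sub gPhi by auto
    ultimately have "\<gamma> = a" using simple_perm[OF a gP] not_both by blast
    have "word_prod vs \<circ> srefl \<beta> = srefl a \<circ> word_prod vs"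
      using srefl_conj[OF orth_wp, of vs \<beta>] \<open>\<gamma> = a\<close> \<gamma>_def by simp
    then have "word_prod (a # vs) \<circ> srefl \<beta> = (srefl a \<circ> srefl a) \<circ> word_prod vs"
      by (simp add: comp_assoc)
    also have "\<dots> = word_prod vs" using Delta_nz a by (simp add: srefl_invol_comp)
    finally have fin: "word_prod (a # vs) \<circ> srefl \<beta> = word_prod (take 0 (a # vs) @ drop (Suc 0) (a # vs))" by simp
    show ?thesis
    proof (rule exI[of _ 0], intro conjI)
      show "0 < length (a # vs)" by simp
    qed (rule fin)
  qed
qed

end



context wctx begin

lemma len_down:
  assumes w: "w \<in> weyl \<Delta>" and b: "\<beta> \<in> P" and n: "- w \<beta> \<in> P"
  shows "w \<circ> srefl \<beta> \<in> weyl \<Delta> \<and> len \<Delta> (w \<circ> srefl \<beta>) < len \<Delta> w"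
proof -
  obtain ws where ws: "set ws \<subseteq> \<Delta>" "word_prod ws = w" "length ws = len \<Delta> w"
    using len_word w by blast
  obtain i where i: "i < length ws" "w \<circ> srefl \<beta> = word_prod (take i ws @ drop (Suc i) ws)"
    using deletion[OF ws(1) b] n ws(2) by blast
  have s: "set (take i ws @ drop (Suc i) ws) \<subseteq> \<Delta>" using ws(1)
    by (auto dest: in_set_takeD in_set_dropD)
  have "len \<Delta> (w \<circ> srefl \<beta>) \<le> length (take i ws @ drop (Suc i) ws)"
    unfolding i(2) by (rule len_le[OF s])
  also have "\<dots> < length ws" using i(1) by simp
  finally show ?thesis using ws(3) wp_weyl[OF s] i(2) by simp
qed

lemma len_up:
  assumes w: "w \<in> weyl \<Delta>" and b: "\<beta> \<in> P" and ww: "w \<circ> srefl \<beta> \<in> weyl \<Delta>" and p: "w \<beta> \<in> P"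
  shows "len \<Delta> w < len \<Delta> (w \<circ> srefl \<beta>)"
proof -
  have bnz: "\<beta> \<noteq> 0" using b pos_sub Phi_nz by auto
  have "(w \<circ> srefl \<beta>) \<beta> = - w \<beta>" using srefl_self[OF bnz] weyl_neg[OF w] by simp
  then have "- (w \<circ> srefl \<beta>) \<beta> \<in> P" using p by simp
  from len_down[OF ww b this] have "len \<Delta> (w \<circ> srefl \<beta> \<circ> srefl \<beta>) < len \<Delta> (w \<circ> srefl \<beta>)" by (rule conjunct2)
  moreover have "w \<circ> srefl \<beta> \<circ> srefl \<beta> = w" using srefl_invol[OF bnz] by (simp add: fun_eq_iff)
  ultimately show ?thesis by simp
qed

lemma finite_weyl: "finite (weyl \<Delta>)"
proof -
  have inj: "inj_on (\<lambda>f. restrict f \<Phi>) (weyl \<Delta>)"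
  proof (rule inj_onI)
    fix f g assume f: "f \<in> weyl \<Delta>" and g: "g \<in> weyl \<Delta>" and e: "restrict f \<Phi> = restrict g \<Phi>"
    have "\<And>x. x \<in> \<Phi> \<Longrightarrow> f x = g x" using e by (metis restrict_apply')
    show "f = g"
    proof
      fix x
      have "x \<in> span \<Phi>" using spanPhi by simp
      then show "f x = g x"
        using linear_eq_on_span[OF weyl_linear[OF f] weyl_linear[OF g], of \<Phi> x] \<open>\<And>x. x \<in> \<Phi> \<Longrightarrow> f x = g x\<close> by blast
    qed
  qed
  have "(\<lambda>f. restrict f \<Phi>) ` weyl \<Delta> \<subseteq> (\<Pi>\<^sub>E i \<in> \<Phi>. \<Phi>)"
    using weyl_Phi by auto
  moreover have "finite (\<Pi>\<^sub>E i \<in> \<Phi>. \<Phi>)" using finPhi by (simp add: finite_PiE)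
  ultimately have "finite ((\<lambda>f. restrict f \<Phi>) ` weyl \<Delta>)" using finite_subset by blast
  then show ?thesis using finite_imageD inj by blast
qed

lemma nonneg_comb_sum:
  assumes "finite A" "\<forall>i\<in>A. k i \<ge> 0" "\<forall>i\<in>A. nonneg_comb \<Delta> (f i)"
  shows "nonneg_comb \<Delta> (\<Sum>i\<in>A. k i *\<^sub>R f i)"
  using assms
proof (induction A rule: finite_induct)
  case empty
  show ?case unfolding nonneg_comb_def by (rule exI[of _ "\<lambda>_. 0"]) simp
next
  case (insert x A)
  obtain c where c: "\<forall>\<alpha>\<in>\<Delta>. c \<alpha> \<ge> 0" "f x = (\<Sum>\<alpha>\<in>\<Delta>. c \<alpha> *\<^sub>R \<alpha>)"
    using insert.prems by (auto simp: nonneg_comb_def)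
  obtain d where d: "\<forall>\<alpha>\<in>\<Delta>. d \<alpha> \<ge> 0" "(\<Sum>i\<in>A. k i *\<^sub>R f i) = (\<Sum>\<alpha>\<in>\<Delta>. d \<alpha> *\<^sub>R \<alpha>)"
    using insert by (auto simp: nonneg_comb_def)
  have "(\<Sum>i\<in>insert x A. k i *\<^sub>R f i) = k x *\<^sub>R f x + (\<Sum>i\<in>A. k i *\<^sub>R f i)"
    using insert by simp
  also have "\<dots> = (\<Sum>\<alpha>\<in>\<Delta>. (k x * c \<alpha> + d \<alpha>) *\<^sub>R \<alpha>)"
    unfolding c(2) d(2) by (simp add: scaleR_sum_right sum.distrib scaleR_add_left)
  finally show ?case unfolding nonneg_comb_def
    using c(1) d(1) insert.prems by (intro exI[of _ "\<lambda>\<alpha>. k x * c \<alpha> + d \<alpha>"]) auto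
qed

lemma longest: obtains v where "v \<in> weyl \<Delta>" "\<And>\<beta>. \<beta> \<in> P \<Longrightarrow> - v \<beta> \<in> P"
proof -
  define m where "m = Max (len \<Delta> ` weyl \<Delta>)"
  have fin: "finite (len \<Delta> ` weyl \<Delta>)" using finite_weyl by simp
  have "m \<in> len \<Delta> ` weyl \<Delta>" unfolding m_def using fin weyl_id by (intro Max_in) auto
  then obtain v where v: "v \<in> weyl \<Delta>" "len \<Delta> v = m" by auto
  have mx: "\<And>u. u \<in> weyl \<Delta> \<Longrightarrow> len \<Delta> u \<le> m" unfolding m_def using fin by simp
  have sn: "- v \<alpha> \<in> P" if a: "\<alpha> \<in> \<Delta>" for \<alpha>
  proof (rule ccontr)
    assume "- v \<alpha> \<notin> P"
    then have "v \<alpha> \<in> P" using pos_or_neg weyl_Phi[OF v(1)] a Delta_sub by blast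
    then have "len \<Delta> v < len \<Delta> (v \<circ> srefl \<alpha>)"
      using len_up[OF v(1) Delta_pos[OF a] weyl_comp[OF v(1) weyl_srefl[OF a]]] by blast
    moreover have "len \<Delta> (v \<circ> srefl \<alpha>) \<le> m" using mx weyl_comp[OF v(1) weyl_srefl[OF a]] by blast
    ultimately show False using v(2) by simp
  qed
  have "- v \<beta> \<in> P" if b: "\<beta> \<in> P" for \<beta>
  proof -
    obtain c where c: "\<forall>\<gamma>\<in>\<Delta>. c \<gamma> \<ge> 0" "\<beta> = (\<Sum>\<gamma>\<in>\<Delta>. c \<gamma> *\<^sub>R \<gamma>)"
      using b by (auto simp: pos_roots_def nonneg_comb_def)
    have l: "linear v" using weyl_linear[OF v(1)] .
    have "- v \<beta> = (\<Sum>\<gamma>\<in>\<Delta>. c \<gamma> *\<^sub>R (- v \<gamma>))"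
      unfolding c(2) by (simp add: linear_sum[OF l] linear_cmul[OF l] sum_negf)
    moreover have "nonneg_comb \<Delta> (\<Sum>\<gamma>\<in>\<Delta>. c \<gamma> *\<^sub>R (- v \<gamma>))"
      using c(1) sn finDelta by (intro nonneg_comb_sum) (auto simp: pos_roots_def)
    moreover have "- v \<beta> \<in> \<Phi>" using neg_closed weyl_Phi[OF v(1)] b pos_sub by auto
    ultimately show ?thesis by (simp add: pos_roots_def)
  qed
  then show ?thesis using that v(1) by blast
qed

lemma srefl_weyl: assumes b: "\<beta> \<in> P" shows "srefl \<beta> \<in> weyl \<Delta>"
proof -
  obtain v where v: "v \<in> weyl \<Delta>" "\<And>\<beta>. \<beta> \<in> P \<Longrightarrow> - v \<beta> \<in> P" using longest by blast
  have "v \<circ> srefl \<beta> \<in> weyl \<Delta>" using len_down[OF v(1) b v(2)[OF b]] by blast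
  obtain v' where v': "v' \<in> weyl \<Delta>" "v' \<circ> v = id" "v \<circ> v' = id" using weyl_inv[OF v(1)] by blast
  have "v' \<circ> (v \<circ> srefl \<beta>) = (v' \<circ> v) \<circ> srefl \<beta>" by (rule comp_assoc[symmetric])
  also have "\<dots> = srefl \<beta>" by (simp only: v'(2) id_comp)
  finally show ?thesis using weyl_comp[OF v'(1) \<open>v \<circ> srefl \<beta> \<in> weyl \<Delta>\<close>] by simp
qed

lemma srefl_weyl_Phi: assumes "\<gamma> \<in> \<Phi>" shows "srefl \<gamma> \<in> weyl \<Delta>"
  using pos_or_neg[OF assms] srefl_weyl srefl_neg by metis

lemma len_refl_pos: "w \<in> weyl \<Delta> \<Longrightarrow> \<beta> \<in> P \<Longrightarrow> w \<beta> \<in> P \<Longrightarrow> len \<Delta> w < len \<Delta> (w \<circ> srefl \<beta>)"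
  using len_up srefl_weyl weyl_comp by blast

lemma len_refl_neg: "w \<in> weyl \<Delta> \<Longrightarrow> \<beta> \<in> P \<Longrightarrow> - w \<beta> \<in> P \<Longrightarrow> len \<Delta> (w \<circ> srefl \<beta>) < len \<Delta> w"
  using len_down by blast

lemma len_refl_ne: assumes w: "w \<in> weyl \<Delta>" and g: "\<gamma> \<in> \<Phi>"
  shows "len \<Delta> (w \<circ> srefl \<gamma>) \<noteq> len \<Delta> w"
proof -
  obtain \<beta> where b: "\<beta> \<in> P" "srefl \<gamma> = srefl \<beta>"
    using pos_or_neg[OF g] srefl_neg by metis
  have "w \<beta> \<in> \<Phi>" using weyl_Phi[OF w] b(1) pos_sub by auto
  then have "w \<beta> \<in> P \<or> - w \<beta> \<in> P" using pos_or_neg by blast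
  then show ?thesis using len_refl_pos[OF w b(1)] len_refl_neg[OF w b(1)] b(2) by force
qed

lemma left_right: assumes w: "w \<in> weyl \<Delta>" and g: "\<gamma> \<in> \<Phi>"
  obtains \<delta> where "\<delta> \<in> \<Phi>" "srefl \<gamma> \<circ> w = w \<circ> srefl \<delta>"
proof -
  obtain w' where w': "w' \<in> weyl \<Delta>" "w' \<circ> w = id" "w \<circ> w' = id" using weyl_inv[OF w] by blast
  have "w (w' \<gamma>) = \<gamma>" using w'(3) by (metis comp_apply id_apply)
  then have "srefl \<gamma> \<circ> w = w \<circ> srefl (w' \<gamma>)" using srefl_conj[OF weyl_orth[OF w], of "w' \<gamma>"] by simp
  then show ?thesis using that weyl_Phi[OF w'(1) g] by blast
qed

lemma len_lrefl_ne: assumes w: "w \<in> weyl \<Delta>" and g: "\<gamma> \<in> \<Phi>"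
  shows "len \<Delta> (srefl \<gamma> \<circ> w) \<noteq> len \<Delta> w"
  using left_right[OF w g] len_refl_ne[OF w] by metis

end



context wctx begin

abbreviation "ble \<equiv> bruhat_le \<Phi> \<Delta>"
abbreviation "lW \<equiv> len \<Delta>"

lemma bruhat_props: "ble x y \<Longrightarrow> x \<in> weyl \<Delta> \<and> y \<in> weyl \<Delta> \<and> lW x \<le> lW y \<and> (x \<noteq> y \<longrightarrow> lW x < lW y)"
proof (induction rule: bruhat_le.induct)
  case (bruhat_refl x) then show ?case by simp
next
  case (bruhat_step x y \<beta>)
  have yb: "y \<circ> srefl \<beta> \<in> weyl \<Delta>" using weyl_comp[OF _ srefl_weyl[OF bruhat_step.hyps(2)]] bruhat_step.IH by blast
  have xw: "x \<in> weyl \<Delta>" using bruhat_step.IH by blast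
  have "lW x < lW (y \<circ> srefl \<beta>)" using bruhat_step.IH bruhat_step.hyps(3) by linarith
  then show ?case using yb xw by (blast intro: less_imp_le)
qed

lemma bruhat_trans_aux: "ble y z \<Longrightarrow> ble x y \<Longrightarrow> ble x z"
  by (induction rule: bruhat_le.induct) (auto intro: bruhat_le.intros)

lemma bruhat_trans: "ble x y \<Longrightarrow> ble y z \<Longrightarrow> ble x z"
  using bruhat_trans_aux by blast

lemma up_refl: assumes u: "u \<in> weyl \<Delta>" and g: "\<gamma> \<in> \<Phi>" and l: "lW u < lW (u \<circ> srefl \<gamma>)"
  shows "ble u (u \<circ> srefl \<gamma>)"
proof -
  obtain \<beta> where b: "\<beta> \<in> P" "srefl \<gamma> = srefl \<beta>" using pos_or_neg[OF g] srefl_neg by metis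
  show ?thesis using bruhat_step[OF bruhat_refl[OF u] b(1)] l b(2) by simp
qed

lemma down_refl: assumes u: "u \<in> weyl \<Delta>" and g: "\<gamma> \<in> \<Phi>" and l: "lW (u \<circ> srefl \<gamma>) < lW u"
  shows "ble (u \<circ> srefl \<gamma>) u"
proof -
  have u': "u \<circ> srefl \<gamma> \<in> weyl \<Delta>" using weyl_comp[OF u srefl_weyl_Phi[OF g]] .
  have e: "u \<circ> srefl \<gamma> \<circ> srefl \<gamma> = u" by (simp add: fun_eq_iff srefl_invol[OF Phi_nz[OF g]])
  show ?thesis using up_refl[OF u' g] l unfolding e by simp
qed

lemma up_left: assumes u: "u \<in> weyl \<Delta>" and g: "\<gamma> \<in> \<Phi>" and l: "lW u < lW (srefl \<gamma> \<circ> u)"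
  shows "ble u (srefl \<gamma> \<circ> u)"
  using left_right[OF u g] up_refl[OF u] l by metis

lemma wp_ins: assumes "set q \<subseteq> \<Delta>"
  shows "word_prod (p @ a # q) = word_prod (p @ q) \<circ> srefl (word_prod (rev q) a)"
proof -
  define \<delta> where "\<delta> = word_prod (rev q) a"
  have "word_prod q \<delta> = a" unfolding \<delta>_def using wp_apply_rev[OF assms] .
  then have c: "srefl a \<circ> word_prod q = word_prod q \<circ> srefl \<delta>" using srefl_conj[OF orth_wp, of q \<delta>] by simp
  have pw: "\<And>v. word_prod q (srefl \<delta> v) = srefl a (word_prod q v)" using fun_cong[OF c] by (metis comp_apply)
  show ?thesis unfolding \<delta>_def[symmetric] by (simp add: fun_eq_iff pw)
qed

lemma lift_aux:
  assumes a: "\<alpha> \<in> \<Delta>"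
  shows "ble x u \<Longrightarrow> lW x < lW (srefl \<alpha> \<circ> x) \<Longrightarrow> lW (srefl \<alpha> \<circ> u) < lW u \<Longrightarrow> ble x (srefl \<alpha> \<circ> u)"
proof (induction rule: bruhat_le.induct)
  case (bruhat_refl x) then show ?case by simp
next
  case (bruhat_step x y \<beta>)
  define s where "s = srefl \<alpha>"
  define u where "u = y \<circ> srefl \<beta>"
  have aPhi: "\<alpha> \<in> \<Phi>" using a Delta_sub by auto
  have bPhi: "\<beta> \<in> \<Phi>" using bruhat_step.hyps(2) pos_sub by auto
  have y: "y \<in> weyl \<Delta>" using bruhat_props[OF bruhat_step.hyps(1)] by blast
  have x: "x \<in> weyl \<Delta>" using bruhat_props[OF bruhat_step.hyps(1)] by blast
  have uW: "u \<in> weyl \<Delta>" unfolding u_def using weyl_comp[OF y srefl_weyl[OF bruhat_step.hyps(2)]] .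
  have sW: "s \<in> weyl \<Delta>" unfolding s_def using weyl_srefl[OF a] .
  have suW: "s \<circ> u \<in> weyl \<Delta>" using weyl_comp[OF sW uW] .
  have ssu: "s \<circ> (s \<circ> u) = u" unfolding s_def by (simp add: fun_eq_iff srefl_invol[OF Delta_nz[OF a]])
  have lyu: "lW y < lW u" using bruhat_step.hyps(3) u_def by simp
  have lsu: "lW (s \<circ> u) < lW u" using bruhat_step.prems(2) unfolding u_def s_def .
  have lsu2: "lW u \<le> lW (s \<circ> u) + 1" using len_left[OF a suW] ssu s_def by simp
  show ?case
  proof (cases "lW (s \<circ> y) < lW y")
    case True
    have IH: "ble x (s \<circ> y)" using bruhat_step.IH bruhat_step.prems(1) True unfolding s_def by blast
    have sy: "s \<circ> y \<in> weyl \<Delta>" using weyl_comp[OF sW y] .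
    have e: "s \<circ> u = (s \<circ> y) \<circ> srefl \<beta>" unfolding u_def by (simp add: comp_assoc)
    have "lW (s \<circ> y) < lW ((s \<circ> y) \<circ> srefl \<beta>)" using True lyu lsu2 e by simp
    then have "ble (s \<circ> y) (s \<circ> u)" using up_refl[OF sy bPhi] e by simp
    then show ?thesis using bruhat_trans[OF IH] unfolding s_def u_def by blast
  next
    case False
    then have ly: "lW y < lW (s \<circ> y)" using len_lrefl_ne[OF y aPhi] s_def by fastforce
    have yy: "ble y (s \<circ> y)" using up_left[OF y aPhi] ly s_def by simp
    obtain vs where vs: "set vs \<subseteq> \<Delta>" "word_prod vs = s \<circ> u" "length vs = lW (s \<circ> u)"
      using len_word[OF suW] by blast
    have avs: "set (\<alpha> # vs) \<subseteq> \<Delta>" using vs a by simp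
    have wu: "word_prod (\<alpha> # vs) = u" using vs(2) ssu s_def by simp
    have uuy: "u \<circ> srefl \<beta> = y" unfolding u_def by (simp add: fun_eq_iff srefl_invol[OF Phi_nz[OF bPhi]])
    have "u \<beta> \<in> \<Phi>" using weyl_Phi[OF uW bPhi] .
    moreover have "u \<beta> \<notin> P"
    proof
      assume "u \<beta> \<in> P"
      then have "lW u < lW (u \<circ> srefl \<beta>)" using len_refl_pos[OF uW bruhat_step.hyps(2)] by blast
      then show False using uuy lyu by simp
    qed
    ultimately have nP: "- u \<beta> \<in> P" using pos_or_neg by blast
    obtain i where i: "i < length (\<alpha> # vs)"
      "word_prod (\<alpha> # vs) \<circ> srefl \<beta> = word_prod (take i (\<alpha> # vs) @ drop (Suc i) (\<alpha> # vs))"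
      using deletion[OF avs bruhat_step.hyps(2)] nP wu by blast
    have yi: "y = word_prod (take i (\<alpha> # vs) @ drop (Suc i) (\<alpha> # vs))" using i(2) wu uuy by simp
    show ?thesis
    proof (cases i)
      case 0
      then have "y = s \<circ> u" using yi vs(2) by simp
      then show ?thesis using bruhat_step.hyps(1) unfolding s_def u_def by metis
    next
      case (Suc j)
      define v' where "v' = word_prod (take j vs @ drop (Suc j) vs)"
      have j: "j < length vs" using i(1) Suc by simp
      have yv: "y = s \<circ> v'" using yi Suc v'_def s_def by simp
      have syv: "s \<circ> y = v'" using yv ssu by (simp add: s_def fun_eq_iff srefl_invol Delta_nz[OF a])
      have sv': "set (take j vs @ drop (Suc j) vs) \<subseteq> \<Delta>" using vs(1)
        by (auto dest: in_set_takeD in_set_dropD)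
      have vW: "v' \<in> weyl \<Delta>" using wp_weyl[OF sv'] v'_def by simp
      have sd: "set (drop (Suc j) vs) \<subseteq> \<Delta>" using vs(1) by (auto dest: in_set_dropD)
      have decomp: "vs = take j vs @ vs ! j # drop (Suc j) vs" using j by (simp add: id_take_nth_drop)
      define \<gamma> where "\<gamma> = word_prod (rev (drop (Suc j) vs)) (vs ! j)"
      have gPhi: "\<gamma> \<in> \<Phi>" unfolding \<gamma>_def using wp_Phi[of "rev (drop (Suc j) vs)"] sd vs(1) j Delta_sub
        by (simp add: subset_iff)
      have "word_prod vs = v' \<circ> srefl \<gamma>"
        using wp_ins[OF sd, of "take j vs" "vs ! j"] decomp v'_def \<gamma>_def by simp
      then have vsu: "v' \<circ> srefl \<gamma> = s \<circ> u" using vs(2) by simp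
      have "lW v' \<le> length (take j vs @ drop (Suc j) vs)" unfolding v'_def by (rule len_le[OF sv'])
      also have "\<dots> < length vs" using j by simp
      finally have "lW v' < lW (v' \<circ> srefl \<gamma>)" using vsu vs(3) by simp
      then have "ble v' (s \<circ> u)" using up_refl[OF vW gPhi] vsu by simp
      then have "ble y (s \<circ> u)" using yy syv bruhat_trans by simp
      then show ?thesis using bruhat_trans[OF bruhat_step.hyps(1)] unfolding s_def u_def by blast
    qed
  qed
qed

lemma lift: "\<alpha> \<in> \<Delta> \<Longrightarrow> ble x u \<Longrightarrow> lW x < lW (srefl \<alpha> \<circ> x) \<Longrightarrow> lW (srefl \<alpha> \<circ> u) < lW u \<Longrightarrow> ble x (srefl \<alpha> \<circ> u)"
  using lift_aux by blast

lemma Zprop: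
  assumes a: "\<alpha> \<in> \<Delta>" and x: "x \<in> weyl \<Delta>" and lx: "lW x < lW (srefl \<alpha> \<circ> x)" and u: "u \<in> weyl \<Delta>"
  shows "ble x (srefl \<alpha> \<circ> u) \<longleftrightarrow> ble x u"
proof -
  have aPhi: "\<alpha> \<in> \<Phi>" using a Delta_sub by auto
  have su: "srefl \<alpha> \<circ> u \<in> weyl \<Delta>" using weyl_comp[OF weyl_srefl[OF a] u] .
  have ssu: "srefl \<alpha> \<circ> (srefl \<alpha> \<circ> u) = u" by (simp add: fun_eq_iff srefl_invol[OF Delta_nz[OF a]])
  show ?thesis
  proof
    assume h: "ble x (srefl \<alpha> \<circ> u)"
    show "ble x u"
    proof (cases "lW u < lW (srefl \<alpha> \<circ> u)")
      case True
      then have "lW (srefl \<alpha> \<circ> (srefl \<alpha> \<circ> u)) < lW (srefl \<alpha> \<circ> u)" using ssu by simp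
      then show ?thesis using lift[OF a h lx] ssu by simp
    next
      case False
      then have "lW (srefl \<alpha> \<circ> u) < lW (srefl \<alpha> \<circ> (srefl \<alpha> \<circ> u))"
        using len_lrefl_ne[OF u aPhi] ssu by fastforce
      then have "ble (srefl \<alpha> \<circ> u) u" using up_left[OF su aPhi] ssu by simp
      then show ?thesis using bruhat_trans[OF h] by simp
    qed
  next
    assume h: "ble x u"
    show "ble x (srefl \<alpha> \<circ> u)"
    proof (cases "lW (srefl \<alpha> \<circ> u) < lW u")
      case True
      then show ?thesis using lift[OF a h lx] by simp
    next
      case False
      then have "lW u < lW (srefl \<alpha> \<circ> u)" using len_lrefl_ne[OF u aPhi] by fastforce
      then show ?thesis using bruhat_trans[OF h up_left[OF u aPhi]] by simp
    qed
  qed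
qed

end



lemma del_pos_Cons: "del_pos (a # xs) J = (if Suc 0 \<in> J then del_pos xs {j. Suc j \<in> J} else a # del_pos xs {j. Suc j \<in> J})"
  unfolding del_pos_def by (simp add: nths_Cons)

lemma del_pos_ins0: "del_pos xs (insert 0 J) = del_pos xs J" unfolding del_pos_def by simp

lemma del_pos_empty: "del_pos xs {} = xs" unfolding del_pos_def by (simp add: nths_all)

lemma set_del_pos: "set (del_pos xs J) \<subseteq> set xs" by (simp add: del_pos_def set_nths_subset)

lemma length_del_pos: "length (del_pos xs J) = length xs - card (J \<inter> {1..length xs})"
proof -
  define l where "l = length xs"
  define A where "A = {i. i < l \<and> Suc i \<notin> J}"
  define B where "B = {i. i < l \<and> Suc i \<in> J}"
  have len: "length (del_pos xs J) = card A" unfolding del_pos_def A_def l_def by (simp add: length_nths)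
  have un: "A \<union> B = {..<l}" "A \<inter> B = {}" unfolding A_def B_def by auto
  have "card A + card B = l" using card_Un_disjoint[of A B] un by (simp add: A_def B_def)
  moreover have "Suc ` B = J \<inter> {1..l}"
  proof
    show "Suc ` B \<subseteq> J \<inter> {1..l}" unfolding B_def by auto
    show "J \<inter> {1..l} \<subseteq> Suc ` B"
    proof
      fix i assume "i \<in> J \<inter> {1..l}"
      then have "i = Suc (i - 1)" "i - 1 \<in> B" unfolding B_def by auto
      then show "i \<in> Suc ` B" by blast
    qed
  qed
  then have "card B = card (J \<inter> {1..l})" by (metis card_image inj_Suc inj_on_subset subset_UNIV)
  ultimately show ?thesis using len l_def by simp
qed

lemma shift_img: "0 \<notin> A \<Longrightarrow> {j. Suc j \<in> A} = (\<lambda>i. i - 1) ` A"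
proof
  assume "0 \<notin> A"
  show "{j. Suc j \<in> A} \<subseteq> (\<lambda>i. i - 1) ` A" by (auto intro: image_eqI[where x="Suc _"])
  show "(\<lambda>i. i - 1) ` A \<subseteq> {j. Suc j \<in> A}"
  proof
    fix y assume "y \<in> (\<lambda>i. i - 1) ` A"
    then obtain i where i: "i \<in> A" "y = i - 1" by blast
    then have "i \<noteq> 0" using \<open>0 \<notin> A\<close> by (metis)
    then have "Suc y = i" using i(2) by simp
    then show "y \<in> {j. Suc j \<in> A}" using i(1) by simp
  qed
qed




context wctx begin

lemma less_iff: assumes v: "v \<in> weyl \<Delta>" and b: "\<beta> \<in> P"
  shows "bruhat_less \<Phi> \<Delta> (v \<circ> srefl \<beta>) v \<longleftrightarrow> - v \<beta> \<in> P"
proof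
  assume h: "bruhat_less \<Phi> \<Delta> (v \<circ> srefl \<beta>) v"
  then have "lW (v \<circ> srefl \<beta>) < lW v" using bruhat_props unfolding bruhat_less_def by blast
  then have "v \<beta> \<notin> P" using len_refl_pos[OF v b] by fastforce
  then show "- v \<beta> \<in> P" using pos_or_neg weyl_Phi[OF v] b pos_sub by blast
next
  assume "- v \<beta> \<in> P"
  then have l: "lW (v \<circ> srefl \<beta>) < lW v" using len_refl_neg[OF v b] by blast
  have "\<beta> \<in> \<Phi>" using b pos_sub by auto
  then have "ble (v \<circ> srefl \<beta>) v" using down_refl[OF v _ l] by blast
  then show "bruhat_less \<Phi> \<Delta> (v \<circ> srefl \<beta>) v" using l unfolding bruhat_less_def by auto
qed

lemma weyl_inj: assumes "w \<in> weyl \<Delta>" "w a = w b" shows "a = b"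
proof -
  obtain w' where "w' \<circ> w = id" using weyl_inv[OF assms(1)] by blast
  then show ?thesis using assms(2) by (metis comp_apply id_apply)
qed

lemma srefl_negv: "srefl a (- v) = - srefl a v"
  using linear_srefl linear_neg by blast

end



context wctx begin

lemma main:
  fixes x w :: "'a \<Rightarrow> 'a" and \<alpha>1 :: 'a and ws' :: "'a list" and is' :: "nat list"
  assumes xW: "x \<in> weyl \<Delta>" and wW: "w \<in> weyl \<Delta>"
    and xw: "bruhat_less \<Phi> \<Delta> x w"
    and red: "reduced_word \<Delta> (\<alpha>1 # ws') w"
    and good: "good_word \<Phi> \<Delta> x (\<alpha>1 # ws')"
    and lamC: "Cminus_label \<Phi> \<Delta> x (\<alpha>1 # ws') (rev (lam \<Phi> \<Delta> x (\<alpha>1 # ws')))"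
    and i1: "lam \<Phi> \<Delta> x (\<alpha>1 # ws') = 1 # is'"
  shows "bruhat_less \<Phi> \<Delta> x (srefl \<alpha>1 \<circ> x)
    \<and> Sxw \<Phi> \<Delta> x (srefl \<alpha>1 \<circ> w) = Sxw \<Phi> \<Delta> x w - {word_prod (rev ws') \<alpha>1}
    \<and> reduced_word \<Delta> ws' (srefl \<alpha>1 \<circ> w) \<and> good_word \<Phi> \<Delta> x ws'
    \<and> lam \<Phi> \<Delta> x ws' = map (\<lambda>i. i - 1) is'
         \<and> Cminus_label \<Phi> \<Delta> x ws' (rev (lam \<Phi> \<Delta> x ws'))"
proof -
  define s where "s = srefl \<alpha>1"
  define ws where "ws = \<alpha>1 # ws'"
  define m where "m = length ws'"
  have a1: "\<alpha>1 \<in> \<Delta>" and ws'D: "set ws' \<subseteq> \<Delta>" using red by (auto simp: reduced_word_def)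
  have a1Phi: "\<alpha>1 \<in> \<Phi>" using a1 Delta_sub by auto
  have sinv: "\<And>v. s (s v) = v" unfolding s_def using srefl_invol[OF Delta_nz[OF a1]] .
  have sW: "s \<in> weyl \<Delta>" unfolding s_def using weyl_srefl[OF a1] .
  have wdef: "w = s \<circ> word_prod ws'" using red unfolding reduced_word_def s_def by simp
  have lenw: "lW w = Suc m" using red unfolding reduced_word_def m_def by simp
  have sw: "s \<circ> w = word_prod ws'" unfolding wdef by (simp add: fun_eq_iff sinv)
  have ssz: "\<And>z. s \<circ> (s \<circ> z) = z" by (simp add: fun_eq_iff sinv)
  have lenws: "length ws = Suc m" unfolding ws_def m_def by simp

  have finLS: "finite (lam_set \<Phi> \<Delta> x ws)" unfolding lam_set_def by simp
  have LSsub: "lam_set \<Phi> \<Delta> x ws \<subseteq> {1..Suc m}" unfolding lam_set_def lenws by auto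
  have LS: "lam_set \<Phi> \<Delta> x ws = insert 1 (set is')"
    using set_sorted_list_of_set[OF finLS] i1 unfolding lam_def ws_def by simp
  have strict: "sorted_wrt (<) (1 # is')"
    using strict_sorted_list_of_set[of "lam_set \<Phi> \<Delta> x ws"] i1 unfolding lam_def ws_def by simp
  have gt1: "\<And>i. i \<in> set is' \<Longrightarrow> 1 < i" using strict by simp
  have strict': "sorted_wrt (<) is'" using strict by simp
  have dist': "distinct is'" using strict' strict_sorted_iff by blast
  have rng: "\<And>i. i \<in> set is' \<Longrightarrow> i \<le> Suc m" using LS LSsub by auto
  have n0: "0 \<notin> set is'" using gt1 by fastforce
  have n1: "1 \<notin> set is'" using gt1 by fastforce

  define f :: "nat \<Rightarrow> nat" where "f = (\<lambda>i. i - 1)"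
  define L' where "L' = map f (rev is')"
  define k where "k = length is'"
  have lenL': "length L' = k" unfolding L'_def k_def by simp
  have setL': "set L' = {j. Suc j \<in> set is'}" unfolding L'_def f_def using shift_img[OF n0] by simp
  have L'rng: "set L' \<subseteq> {1..m}"
  proof
    fix j assume "j \<in> set L'"
    then have "Suc j \<in> set is'" using setL' by simp
    then show "j \<in> {1..m}" using gt1 rng by fastforce
  qed
  have injf: "inj_on f (set is')" unfolding f_def inj_on_def using n0 by (metis Suc_pred' gr0I)
  have distL': "distinct L'" unfolding L'_def using dist' injf by (simp add: distinct_map)
  have kle: "k \<le> m" using distinct_card[OF distL'] L'rng lenL'
    by (metis card_atLeastAtMost card_mono diff_Suc_1 finite_atLeastAtMost)

  have revL: "rev (1 # is') = rev is' @ [1]" by simp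
  obtain C where ch: "chain_label \<Phi> \<Delta> x ws C (rev is' @ [1])"
    and sortedL: "sorted_wrt (>) (rev is' @ [1])"
    using lamC i1 unfolding Cminus_label_def ws_def by auto
  have lenC: "length C = Suc (Suc k)" and C0: "C ! 0 = word_prod ws" and lastC: "last C = x"
    and cov: "\<And>j. j < Suc k \<Longrightarrow> bruhat_cover \<Phi> \<Delta> (C ! Suc j) (C ! j)"
    and Cj: "\<And>j. j \<le> Suc k \<Longrightarrow> C ! j = word_prod (del_pos ws (set (take j (rev is' @ [1]))))"
    using ch unfolding chain_label_def k_def by auto

  define C' where "C' = (\<lambda>j. word_prod (del_pos ws' (set (take j L'))))"
  have C'W: "\<And>j. C' j \<in> weyl \<Delta>" unfolding C'_def using wp_weyl set_del_pos ws'D by (meson order_trans)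
  have Crel: "C ! j = s \<circ> C' j" if j: "j \<le> k" for j
  proof -
    have t: "take j (rev is' @ [1]) = take j (rev is')" using j k_def by simp
    have sub: "set (take j (rev is')) \<subseteq> set is'" by (metis set_rev set_take_subset)
    then have "Suc 0 \<notin> set (take j (rev is'))" using n1 by auto
    moreover have "{i. Suc i \<in> set (take j (rev is'))} = set (take j L')"
    proof -
      have "0 \<notin> set (take j (rev is'))" using sub n0 by auto
      then have "{i. Suc i \<in> set (take j (rev is'))} = f ` set (take j (rev is'))"
        unfolding f_def by (rule shift_img)
      also have "\<dots> = set (take j L')" unfolding L'_def by (simp add: take_map)
      finally show ?thesis .
    qed
    ultimately have "del_pos ws (set (take j (rev is'))) = \<alpha>1 # del_pos ws' (set (take j L'))"
      unfolding ws_def by (simp add: del_pos_Cons)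
    then show ?thesis using Cj[of j] j t unfolding C'_def s_def by simp
  qed
  have delfull: "del_pos ws (insert 1 (set is')) = del_pos ws' (set L')"
  proof -
    have "{i. Suc i \<in> insert 1 (set is')} = insert 0 (set L')" using setL' by auto
    then show ?thesis unfolding ws_def by (simp add: del_pos_Cons del_pos_ins0)
  qed
  have takeL': "take k L' = L'" using lenL' by simp
  have xC': "x = C' k"
  proof -
    have "x = word_prod (del_pos ws (lam_set \<Phi> \<Delta> x ws))" using good unfolding good_word_def ws_def .
    then have "x = word_prod (del_pos ws' (set L'))" unfolding LS delfull .
    then show ?thesis unfolding C'_def takeL' .
  qed
  have Cd: "C ! Suc k = C' k"
  proof -
    have "take (Suc k) (rev is' @ [1]) = rev is' @ [1]" using k_def by simp
    then have "C ! Suc k = word_prod (del_pos ws (insert 1 (set is')))" using Cj[of "Suc k"] by simp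
    then show ?thesis unfolding delfull C'_def takeL' .
  qed

  have lenCj: "j \<le> Suc k \<Longrightarrow> lW (C ! j) + j = Suc m" for j
  proof (induction j)
    case 0
    have "C ! 0 = w" using C0 red unfolding ws_def reduced_word_def by simp
    then show ?case using lenw by simp
  next
    case (Suc j)
    then have "bruhat_cover \<Phi> \<Delta> (C ! Suc j) (C ! j)" using cov by simp
    then have "lW (C ! j) = Suc (lW (C ! Suc j))" unfolding bruhat_cover_def by blast
    then show ?case using Suc by simp
  qed
  have lenC': "lW (C' j) = m - j \<and> j \<le> m" if j: "j \<le> k" for j
  proof -
    have dt: "distinct (take j L')" using distL' by simp
    have st: "set (take j L') \<subseteq> {1..m}" using L'rng by (meson order_trans set_take_subset)
    have "card (set (take j L') \<inter> {1..m}) = j"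
      using distinct_card[OF dt] st j lenL' by (simp add: Int_absorb2)
    then have ld: "length (del_pos ws' (set (take j L'))) = m - j"
      using length_del_pos[of ws' "set (take j L')"] m_def by simp
    have "set (del_pos ws' (set (take j L'))) \<subseteq> \<Delta>" using set_del_pos ws'D by (meson order_trans)
    then have up: "lW (C' j) \<le> m - j"
      using len_le[of "del_pos ws' (set (take j L'))"] ld unfolding C'_def by simp
    have "lW (s \<circ> C' j) + j = Suc m" using lenCj[of j] Crel[OF j] j by simp
    moreover have "lW (s \<circ> C' j) \<le> lW (C' j) + 1" unfolding s_def using len_left[OF a1 C'W] .
    moreover have "j \<le> m" using j kle by simp
    ultimately show ?thesis using up by linarith
  qed
  have lt: "lW (C' j) < lW (s \<circ> C' j)" if j: "j \<le> k" for j
  proof -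
    have e: "lW (s \<circ> C' j) + j = Suc m" using lenCj[of j] Crel[OF j] j by simp
    show ?thesis using e lenC'[OF j] by linarith
  qed

  have cvk: "bruhat_cover \<Phi> \<Delta> (C ! Suc k) (C ! k)" using cov by simp
  have part1: "bruhat_less \<Phi> \<Delta> x (s \<circ> x)"
    using cvk unfolding bruhat_cover_def Cd Crel[OF order_refl] xC'[symmetric] by blast
  have lenx: "lW x < lW (s \<circ> x)" using lt[OF order_refl] xC' by simp

  have part3: "reduced_word \<Delta> ws' (s \<circ> w)"
  proof -
    have "lW (s \<circ> w) \<le> m" using len_le[OF ws'D] sw m_def by simp
    moreover have "lW (s \<circ> (s \<circ> w)) \<le> lW (s \<circ> w) + 1" unfolding s_def using len_left[OF a1] weyl_comp[OF sW wW] s_def by blast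
    ultimately have "lW (s \<circ> w) = m" using ssz lenw by (metis add.commute le_antisym plus_1_eq_Suc Suc_le_mono)
    then show ?thesis unfolding reduced_word_def using ws'D sw m_def by simp
  qed

  have LS': "lam_set \<Phi> \<Delta> x ws' = set L'"
  proof (rule set_eqI)
    fix i
    show "i \<in> lam_set \<Phi> \<Delta> x ws' \<longleftrightarrow> i \<in> set L'"
    proof (cases "i \<in> {1..m}")
      case False
      then show ?thesis using L'rng unfolding lam_set_def m_def by auto
    next
      case True
      define u where "u = word_prod (del_pos ws' {i})"
      have uW: "u \<in> weyl \<Delta>" unfolding u_def using wp_weyl set_del_pos ws'D by (meson order_trans)
      have "del_pos ws {Suc i} = \<alpha>1 # del_pos ws' {i}"
        using True unfolding ws_def by (simp add: del_pos_Cons)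
      then have wsu: "word_prod (del_pos ws {Suc i}) = s \<circ> u" unfolding u_def s_def by simp
      have "i \<in> lam_set \<Phi> \<Delta> x ws' \<longleftrightarrow> ble x u" using True unfolding lam_set_def u_def m_def by simp
      also have "\<dots> \<longleftrightarrow> ble x (s \<circ> u)" using Zprop[OF a1 xW _ uW] lenx unfolding s_def by simp
      also have "\<dots> \<longleftrightarrow> Suc i \<in> lam_set \<Phi> \<Delta> x ws" using True wsu unfolding lam_set_def lenws by simp
      also have "\<dots> \<longleftrightarrow> Suc i \<in> set is'" using LS True by auto
      also have "\<dots> \<longleftrightarrow> i \<in> set L'" using setL' by simp
      finally show ?thesis .
    qed
  qed
  have part4: "good_word \<Phi> \<Delta> x ws'"
    unfolding good_word_def LS' using xC' unfolding C'_def takeL' .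
  have mapsorted: "sorted_wrt (<) (map f is')"
    unfolding sorted_wrt_map
  proof (rule sorted_wrt_mono_rel[OF _ strict'])
    fix a b assume "a \<in> set is'" "b \<in> set is'" "a < b"
    then show "f a < f b" using gt1[of a] unfolding f_def by linarith
  qed
  have part5: "lam \<Phi> \<Delta> x ws' = map f is'"
  proof -
    have fin: "finite (set L')" by simp
    have "set (map f is') = set L'" unfolding L'_def by simp
    moreover have "length (map f is') = card (set L')"
      using distinct_card[OF distL'] lenL' k_def by simp
    ultimately show ?thesis unfolding lam_def LS'
      using sorted_list_of_set_unique[OF fin] mapsorted by blast
  qed
  have revlam: "rev (lam \<Phi> \<Delta> x ws') = L'" unfolding part5 L'_def by (simp add: rev_map)
  have part6: "Cminus_label \<Phi> \<Delta> x ws' (rev (lam \<Phi> \<Delta> x ws'))"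
  proof -
    define CC where "CC = map C' [0..<Suc k]"
    have sL': "sorted_wrt (>) L'" unfolding revlam[symmetric] part5 sorted_wrt_rev using mapsorted by simp
    have ccj: "\<And>j. j \<le> k \<Longrightarrow> CC ! j = C' j" unfolding CC_def
      by (metis Suc_le_lessD add_0 diff_zero le_imp_less_Suc nth_map_upt)
    have covs: "bruhat_cover \<Phi> \<Delta> (CC ! Suc j) (CC ! j)" if j: "j < k" for j
    proof -
      have j1: "Suc j \<le> k" "j \<le> k" using j by auto
      have c: "bruhat_cover \<Phi> \<Delta> (C ! Suc j) (C ! j)" using cov j by simp
      then have "ble (s \<circ> C' (Suc j)) (s \<circ> C' j)"
        unfolding bruhat_cover_def bruhat_less_def Crel[OF j1(1)] Crel[OF j1(2)] by blast
      moreover have "ble (C' (Suc j)) (s \<circ> C' (Suc j))"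
        using up_left[OF C'W a1Phi] lt[OF j1(1)] unfolding s_def by blast
      ultimately have "ble (C' (Suc j)) (s \<circ> C' j)" using bruhat_trans by blast
      then have le: "ble (C' (Suc j)) (C' j)"
        using Zprop[OF a1 C'W _ C'W] lt[OF j1(1)] unfolding s_def by blast
      have "lW (C' j) = Suc (lW (C' (Suc j)))" using lenC'[OF j1(1)] lenC'[OF j1(2)] by (simp add: Suc_diff_Suc)
      then show ?thesis using le ccj j1 unfolding bruhat_cover_def bruhat_less_def by auto
    qed
    have "chain_label \<Phi> \<Delta> x ws' CC L'"
      unfolding chain_label_def
    proof (intro conjI allI impI)
      show "length CC = Suc (length L')" unfolding CC_def lenL' by simp
      show "CC ! 0 = word_prod ws'" using ccj[of 0] unfolding C'_def by (simp add: del_pos_empty)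
      show "last CC = x" unfolding CC_def xC' by simp
      show "\<And>j. j < length L' \<Longrightarrow> bruhat_cover \<Phi> \<Delta> (CC ! Suc j) (CC ! j)" using covs lenL' by simp
      show "distinct L'" by (rule distL')
      show "set L' \<subseteq> {1..length ws'}" using L'rng m_def by simp
      show "\<And>j. j \<le> length L' \<Longrightarrow> CC ! j = word_prod (del_pos ws' (set (take j L')))"
        using ccj lenL' unfolding C'_def by simp
    qed
    then show ?thesis unfolding Cminus_label_def revlam using sL' by blast
  qed

  define \<gamma>1 where "\<gamma>1 = word_prod (rev ws') \<alpha>1"
  have v: "word_prod ws' \<in> weyl \<Delta>" using wp_weyl[OF ws'D] .
  have vg: "word_prod ws' \<gamma>1 = \<alpha>1" unfolding \<gamma>1_def using wp_apply_rev[OF ws'D] .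
  have wg: "w \<gamma>1 = - \<alpha>1" unfolding wdef using vg srefl_self[OF Delta_nz[OF a1]] s_def by simp
  have g1Phi: "\<gamma>1 \<in> \<Phi>" unfolding \<gamma>1_def using wp_Phi[of "rev ws'"] ws'D a1Phi by simp
  have g1P: "\<gamma>1 \<in> P"
  proof (rule ccontr)
    assume "\<gamma>1 \<notin> P"
    then have ng: "- \<gamma>1 \<in> P" using pos_or_neg g1Phi by blast
    have "- word_prod ws' (- \<gamma>1) \<in> P" using vg weyl_neg[OF v] Delta_pos[OF a1] by simp
    then have "lW (word_prod ws' \<circ> srefl (- \<gamma>1)) < lW (word_prod ws')" using len_refl_neg[OF v ng] by blast
    moreover have "word_prod ws' \<circ> srefl (- \<gamma>1) = w"
      using srefl_conj[OF weyl_orth[OF v], of \<gamma>1] vg unfolding srefl_neg wdef s_def by simp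
    moreover have "lW (word_prod ws') = m" using part3 sw unfolding reduced_word_def m_def by simp
    ultimately show False using lenw by simp
  qed
  have key: "- s (w \<beta>) \<in> P \<longleftrightarrow> (- w \<beta> \<in> P \<and> \<beta> \<noteq> \<gamma>1)" if b: "\<beta> \<in> P" for \<beta>
  proof -
    define \<delta> where "\<delta> = w \<beta>"
    have dPhi: "\<delta> \<in> \<Phi>" unfolding \<delta>_def using weyl_Phi[OF wW] b pos_sub by auto
    have eqg: "\<beta> = \<gamma>1 \<longleftrightarrow> \<delta> = - \<alpha>1" unfolding \<delta>_def using wg weyl_inj[OF wW] by metis
    have ms: "- s \<delta> = s (- \<delta>)" unfolding s_def by (simp add: srefl_negv)
    show ?thesis
    proof (cases "- \<delta> \<in> P")
      case True
      show ?thesis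
      proof (cases "- \<delta> = \<alpha>1")
        case True
        then have "- s \<delta> = - \<alpha>1" using ms srefl_self[OF Delta_nz[OF a1]] s_def by simp
        then have "- s \<delta> \<notin> P" using not_both[OF a1Phi] Delta_pos[OF a1] by auto
        then show ?thesis using True eqg unfolding \<delta>_def by auto
      next
        case False
        then have "- s \<delta> \<in> P" using ms simple_perm[OF a1 \<open>- \<delta> \<in> P\<close>] s_def by simp
        then show ?thesis using False True eqg unfolding \<delta>_def by auto
      qed
    next
      case False
      then have dP: "\<delta> \<in> P" using pos_or_neg dPhi by blast
      have "\<delta> \<noteq> \<alpha>1"
      proof
        assume "\<delta> = \<alpha>1"
        then have "w \<beta> = w (- \<gamma>1)" unfolding \<delta>_def using wg weyl_neg[OF wW] by simp
        then have "\<beta> = - \<gamma>1" using weyl_inj[OF wW] by blast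
        then show False using not_both[OF g1Phi] g1P b by simp
      qed
      then have "s \<delta> \<in> P" using simple_perm[OF a1 dP] s_def by simp
      moreover have "s \<delta> \<in> \<Phi>" using refl_mem[OF a1Phi dPhi] s_def by simp
      ultimately have "- s \<delta> \<notin> P" using not_both by blast
      then show ?thesis using False unfolding \<delta>_def by auto
    qed
  qed
  have part2: "Sxw \<Phi> \<Delta> x (s \<circ> w) = Sxw \<Phi> \<Delta> x w - {\<gamma>1}"
  proof (rule set_eqI)
    fix \<beta>
    show "\<beta> \<in> Sxw \<Phi> \<Delta> x (s \<circ> w) \<longleftrightarrow> \<beta> \<in> Sxw \<Phi> \<Delta> x w - {\<gamma>1}"
    proof (cases "\<beta> \<in> P")
      case False then show ?thesis unfolding Sxw_def by auto
    next
      case True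
      have swW: "s \<circ> w \<in> weyl \<Delta>" using weyl_comp[OF sW wW] .
      have wbW: "w \<circ> srefl \<beta> \<in> weyl \<Delta>" using weyl_comp[OF wW srefl_weyl[OF True]] .
      have assoc: "s \<circ> w \<circ> srefl \<beta> = s \<circ> (w \<circ> srefl \<beta>)" by (simp add: comp_assoc)
      have z: "ble x (s \<circ> w \<circ> srefl \<beta>) \<longleftrightarrow> ble x (w \<circ> srefl \<beta>)"
        unfolding assoc using Zprop[OF a1 xW _ wbW] lenx unfolding s_def by blast
      have l1: "bruhat_less \<Phi> \<Delta> (s \<circ> w \<circ> srefl \<beta>) (s \<circ> w) \<longleftrightarrow> - s (w \<beta>) \<in> P"
        using less_iff[OF swW True] by simp
      have l2: "bruhat_less \<Phi> \<Delta> (w \<circ> srefl \<beta>) w \<longleftrightarrow> - w \<beta> \<in> P"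
        using less_iff[OF wW True] .
      show ?thesis unfolding Sxw_def using True z l1 l2 key[OF True] by auto
    qed
  qed
  show ?thesis using part1 part2 part3 part4 part5 part6 unfolding s_def \<gamma>1_def f_def by blast
qed

end

theorem lemma5p3:
  fixes \<Phi> \<Delta> :: "'a::euclidean_space set"
    and x w :: "'a \<Rightarrow> 'a"
    and \<alpha>1 :: 'a and ws' :: "'a list" and is' :: "nat list"
  assumes rs: "root_system \<Phi>"
    and ss: "simple_system \<Phi> \<Delta>"
    and xW: "x \<in> weyl \<Delta>" and wW: "w \<in> weyl \<Delta>"
    and xw: "bruhat_less \<Phi> \<Delta> x w"
    and red: "reduced_word \<Delta> (\<alpha>1 # ws') w"
    and good: "good_word \<Phi> \<Delta> x (\<alpha>1 # ws')"
    and lamC: "Cminus_label \<Phi> \<Delta> x (\<alpha>1 # ws') (rev (lam \<Phi> \<Delta> x (\<alpha>1 # ws')))"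
    and i1: "lam \<Phi> \<Delta> x (\<alpha>1 # ws') = 1 # is'"
  shows "bruhat_less \<Phi> \<Delta> x (srefl \<alpha>1 \<circ> x)
    \<and> Sxw \<Phi> \<Delta> x (srefl \<alpha>1 \<circ> w) = Sxw \<Phi> \<Delta> x w - {word_prod (rev ws') \<alpha>1}
    \<and> reduced_word \<Delta> ws' (srefl \<alpha>1 \<circ> w) \<and> good_word \<Phi> \<Delta> x ws'
    \<and> lam \<Phi> \<Delta> x ws' = map (\<lambda>i. i - 1) is'
         \<and> Cminus_label \<Phi> \<Delta> x ws' (rev (lam \<Phi> \<Delta> x ws'))"
  using wctx.main[OF wctx.intro[OF rs ss] xW wW xw red good lamC i1] .

end
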